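(* Let $I\times J$ be a dyadic square and let $G_{i,j}$, $1\leq i\leq m$, $1\leq j\leq n$, be nonnegative bounded measurable functions on $I\times J$. Then $$\Big[\prod_{\substack{1\leq i\leq m\\1\leq j\leq n}}G_{i,j}(x_i,y_j)\Big]_{x_1,\ldots,x_m\in I,\ y_1,\ldots,y_n\in J}\leq\prod_{\substack{1\leq i\leq m\\1\leq j\leq n}}\big[G_{i,j}^{\max\{m,n\}}\big]_{I\times J}^{1/\max\{m,n\}}.$$
   Context: $[\cdot]_{x_1,\ldots,x_m\in I,\,y_1,\ldots,y_n\in J}$ denotes the average $\frac{1}{|I|^m|J|^n}\int_{I^m\times J^n}(\cdot)$, and $[G]_{I\times J}$ denotes the average of $G$ over the square $I\times J$. *)

theory Defs
  imports "HOL-Analysis.Analysis"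
begin

definition dyadic_interval :: "int \<Rightarrow> int \<Rightarrow> real set" where
  "dyadic_interval k a = {real_of_int a * 2 powr real_of_int k ..< (real_of_int a + 1) * 2 powr real_of_int k}"

definition dyadic_square :: "real set \<Rightarrow> real set \<Rightarrow> bool" where
  "dyadic_square I J \<longleftrightarrow> (\<exists>k a b. I = dyadic_interval k a \<and> J = dyadic_interval k b)"

definition avg_sq :: "(real \<Rightarrow> real \<Rightarrow> real) \<Rightarrow> real set \<Rightarrow> real set \<Rightarrow> real" where
  "avg_sq g I J = (LINT z : I \<times> J | lborel. g (fst z) (snd z)) / (measure lborel I * measure lborel J)"

definition avg_multi :: "nat \<Rightarrow> nat \<Rightarrow> ((nat \<Rightarrow> real) \<Rightarrow> (nat \<Rightarrow> real) \<Rightarrow> real) \<Rightarrow> real set \<Rightarrow> real set \<Rightarrow> real" where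
  "avg_multi m n F I J =
     (LINT z : (PiE {1..m} (\<lambda>_. I)) \<times> (PiE {1..n} (\<lambda>_. J)) |
        (PiM {1..m} (\<lambda>_. lborel)) \<Otimes>\<^sub>M (PiM {1..n} (\<lambda>_. lborel)). F (fst z) (snd z))
     / (measure lborel I ^ m * measure lborel J ^ n)"

end

theory Submission
  imports Defs
begin


lemma amgm:
  fixes a :: "'k \<Rightarrow> real" and p :: nat
  assumes K: "finite K" and cK: "card K \<le> p" and p: "0 < p"
    and nn: "\<And>k. k \<in> K \<Longrightarrow> 0 \<le> a k"
  shows "(\<Prod>k\<in>K. a k) \<le> (\<Sum>k\<in>K. a k ^ p) / p + (1 - card K / p)"
proof (cases "\<exists>k\<in>K. a k = 0")
  case True
  then have "(\<Prod>k\<in>K. a k) = 0" using K by auto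
  moreover have "0 \<le> (\<Sum>k\<in>K. a k ^ p) / p" using nn by (auto intro!: sum_nonneg divide_nonneg_nonneg)
  moreover have "card K / p \<le> 1" using cK p by (simp add: divide_le_eq)
  ultimately show ?thesis by linarith
next
  case False
  then have pos: "\<And>k. k \<in> K \<Longrightarrow> 0 < a k" using nn by (metis less_eq_real_def)
  define S where "S = insert None (Some ` K)"
  define w :: "'k option \<Rightarrow> real" where "w = (\<lambda>u. case u of None \<Rightarrow> 1 - card K / p | Some k \<Rightarrow> 1 / real p)"
  define y :: "'k option \<Rightarrow> real" where "y = (\<lambda>u. case u of None \<Rightarrow> 0 | Some k \<Rightarrow> real p * ln (a k))"
  have fS: "finite S" "S \<noteq> {}" using K by (auto simp: S_def)
  have sumS: "\<And>h. (\<Sum>u\<in>S. h u) = h None + (\<Sum>k\<in>K. h (Some k))"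
    using K by (simp add: S_def sum.reindex)
  have w1: "(\<Sum>u\<in>S. w u) = 1" using p by (simp add: sumS w_def)
  have w0: "\<And>u. u \<in> S \<Longrightarrow> 0 \<le> w u" using cK p by (auto simp: S_def w_def divide_le_eq)
  have "exp (\<Sum>u\<in>S. w u *\<^sub>R y u) \<le> (\<Sum>u\<in>S. w u * exp (y u))"
    by (rule convex_on_sum[OF fS exp_convex w1 w0]) auto
  moreover have "(\<Sum>u\<in>S. w u *\<^sub>R y u) = (\<Sum>k\<in>K. ln (a k))"
    using p by (simp add: sumS w_def y_def)
  moreover have "exp (\<Sum>k\<in>K. ln (a k)) = (\<Prod>k\<in>K. a k)"
    using K pos by (simp add: exp_sum)
  moreover have "(\<Sum>u\<in>S. w u * exp (y u)) = (\<Sum>k\<in>K. a k ^ p) / p + (1 - card K / p)"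
  proof -
    have "\<And>k. k \<in> K \<Longrightarrow> exp (real p * ln (a k)) = a k ^ p"
      using pos by (simp add: exp_ln_iff ln_realpow[symmetric] del: ln_realpow)
    then show ?thesis
      by (simp add: sumS w_def y_def sum_divide_distrib)
  qed
  ultimately show ?thesis by simp
qed

lemma integrable_bdd_supp:
  fixes h :: "'a \<Rightarrow> real"
  assumes "A \<in> sets M" "emeasure M A < \<infinity>" "h \<in> borel_measurable M"
    and "\<And>x. x \<in> space M \<Longrightarrow> \<bar>h x\<bar> \<le> C * indicator A x"
  shows "integrable M h"
proof (rule Bochner_Integration.integrable_bound[where f="\<lambda>x. C * indicator A x"])
  show "integrable M (\<lambda>x. C * indicator A x :: real)"
    using assms(1,2) by (intro integrable_mult_right integrable_real_indicator)
  show "h \<in> borel_measurable M" by fact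
  show "AE x in M. norm (h x) \<le> norm (C * indicator A x :: real)"
  proof (rule AE_I2)
    fix x assume "x \<in> space M"
    then have "\<bar>h x\<bar> \<le> C * indicator A x" by (rule assms(4))
    then show "norm (h x) \<le> norm (C * indicator A x :: real)"
      unfolding real_norm_def using abs_ge_self[of "C * indicator A x"] by linarith
  qed
qed

lemma holder:
  fixes M :: "'a measure" and f :: "'k \<Rightarrow> 'a \<Rightarrow> real" and p :: nat
  assumes K: "finite K" "card K \<le> p" "0 < p"
    and A: "A \<in> sets M" "emeasure M A < \<infinity>" "0 < measure M A"
    and meas: "\<And>k. k \<in> K \<Longrightarrow> f k \<in> borel_measurable M"
    and nn: "\<And>k x. k \<in> K \<Longrightarrow> x \<in> space M \<Longrightarrow> 0 \<le> f k x"
    and bd: "\<And>k x. k \<in> K \<Longrightarrow> x \<in> space M \<Longrightarrow> f k x \<le> B"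
    and supp: "\<And>k x. k \<in> K \<Longrightarrow> x \<in> space M \<Longrightarrow> x \<notin> A \<Longrightarrow> f k x = 0"
  shows "(\<integral>x. indicator A x * (\<Prod>k\<in>K. f k x) \<partial>M) / measure M A
     \<le> (\<Prod>k\<in>K. ((\<integral>x. f k x ^ p \<partial>M) / measure M A) powr (1 / real p))"
proof -
  define \<mu> where "\<mu> = measure M A"
  define c where "c = (\<lambda>k. (\<integral>x. f k x ^ p \<partial>M) / \<mu>)"
  have B0: "\<And>k x. k \<in> K \<Longrightarrow> x \<in> space M \<Longrightarrow> \<bar>f k x\<bar> \<le> B * indicator A x"
    using nn bd supp by (auto split: split_indicator)
  have Bp: "\<And>k x. k \<in> K \<Longrightarrow> x \<in> space M \<Longrightarrow> \<bar>f k x ^ p\<bar> \<le> B ^ p * indicator A x"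
  proof -
    fix k x assume kx: "k \<in> K" "x \<in> space M"
    show "\<bar>f k x ^ p\<bar> \<le> B ^ p * indicator A x"
      using nn[OF kx] bd[OF kx] supp[OF kx] K(3)
      by (auto split: split_indicator intro!: power_mono simp: zero_power)
  qed
  have intp: "\<And>k. k \<in> K \<Longrightarrow> integrable M (\<lambda>x. f k x ^ p)"
  proof -
    fix k assume k: "k \<in> K"
    have [measurable]: "f k \<in> borel_measurable M" using meas k .
    show "integrable M (\<lambda>x. f k x ^ p)"
      by (rule integrable_bdd_supp[OF A(1,2) _ Bp[OF k]]) auto
  qed
  have intl: "integrable M (\<lambda>x. indicator A x * (\<Prod>k\<in>K. f k x))"
  proof (rule integrable_bdd_supp[OF A(1,2), where C="B ^ card K"])
    show "(\<lambda>x. indicator A x * (\<Prod>k\<in>K. f k x)) \<in> borel_measurable M"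
      using meas A(1) by measurable
    fix x assume x: "x \<in> space M"
    have "\<bar>\<Prod>k\<in>K. f k x\<bar> \<le> (\<Prod>k\<in>K. B)"
      unfolding abs_prod using nn[OF _ x] bd[OF _ x]
      by (intro prod_mono) auto
    then show "\<bar>indicator A x * (\<Prod>k\<in>K. f k x)\<bar> \<le> B ^ card K * indicator A x"
      by (auto split: split_indicator)
  qed
  have c0: "\<And>k. k \<in> K \<Longrightarrow> 0 \<le> c k"
    unfolding c_def \<mu>_def using nn by (auto intro!: divide_nonneg_nonneg integral_nonneg)
  have rhs0: "0 \<le> (\<Prod>k\<in>K. c k powr (1 / real p))" by (auto intro!: prod_nonneg)
  show ?thesis
  proof (cases "\<exists>k\<in>K. c k = 0")
    case True
    then obtain k where k: "k \<in> K" "c k = 0" by blast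
    then have "(\<integral>x. f k x ^ p \<partial>M) = 0" using A(3) by (simp add: c_def \<mu>_def)
    then have "AE x in M. f k x ^ p = 0"
      using integral_nonneg_eq_0_iff_AE[OF intp[OF k(1)]] nn[OF k(1)] by auto
    then have "AE x in M. indicator A x * (\<Prod>k\<in>K. f k x) = 0"
      by eventually_elim (use k(1) K(1) in auto)
    then have "(\<integral>x. indicator A x * (\<Prod>k\<in>K. f k x) \<partial>M) = 0"
      by (rule integral_eq_zero_AE)
    then show ?thesis using rhs0 by (simp add: c_def \<mu>_def)
  next
    case False
    then have cpos: "\<And>k. k \<in> K \<Longrightarrow> 0 < c k" using c0 by (metis less_eq_real_def)
    define t where "t = (\<lambda>k. c k powr (1 / real p))"
    have tpos: "\<And>k. k \<in> K \<Longrightarrow> 0 < t k" using cpos by (simp add: t_def) (metis less_irrefl)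
    have tp: "\<And>k. k \<in> K \<Longrightarrow> t k ^ p = c k"
    proof -
      fix k assume k: "k \<in> K"
      have "t k ^ p = t k powr real p" using tpos[OF k] by (simp add: powr_realpow)
      also have "\<dots> = c k" using cpos[OF k] K(3) by (simp add: t_def powr_powr)
      finally show "t k ^ p = c k" .
    qed
    define T where "T = (\<Prod>k\<in>K. t k)"
    have Tpos: "0 < T" using tpos by (simp add: T_def prod_pos)
    define R where "R = (\<lambda>x. T * ((\<Sum>k\<in>K. f k x ^ p / c k) / p + (1 - card K / p) * indicator A x))"
    have pt: "\<And>x. x \<in> space M \<Longrightarrow> indicator A x * (\<Prod>k\<in>K. f k x) \<le> R x"
    proof -
      fix x assume x: "x \<in> space M"
      show "indicator A x * (\<Prod>k\<in>K. f k x) \<le> R x"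
      proof (cases "x \<in> A")
        case False
        then show ?thesis using supp[OF _ x] Tpos cpos
          using K(3) by (simp add: R_def power_0_left)
      next
        case True
        have tne: "\<And>k. k \<in> K \<Longrightarrow> t k \<noteq> 0" using tpos by force
        have "T * (\<Prod>k\<in>K. f k x / t k) = (\<Prod>k\<in>K. t k * (f k x / t k))"
          unfolding T_def by (rule prod.distrib[symmetric])
        also have "\<dots> = (\<Prod>k\<in>K. f k x)"
          by (rule prod.cong) (simp_all add: tne)
        finally have "(\<Prod>k\<in>K. f k x) = T * (\<Prod>k\<in>K. f k x / t k)" by simp
        also have "\<dots> \<le> T * ((\<Sum>k\<in>K. (f k x / t k) ^ p) / p + (1 - card K / p))"
          using Tpos nn[OF _ x] tpos
          by (intro mult_left_mono amgm K) (auto intro!: divide_nonneg_pos)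
        also have "\<dots> = R x"
          using True by (simp add: R_def power_divide tp)
        finally show ?thesis using True by simp
      qed
    qed
    have intR: "integrable M R"
      unfolding R_def using intp A(1,2)
      by (auto intro!: integrable_sum simp: Int_absorb1 sets.sets_into_space)
    have "(\<integral>x. indicator A x * (\<Prod>k\<in>K. f k x) \<partial>M) \<le> integral\<^sup>L M R"
      by (rule integral_mono[OF intl intR pt])
    also have "integral\<^sup>L M R = T * ((\<Sum>k\<in>K. (\<integral>x. f k x ^ p \<partial>M) / c k) / p + (1 - card K / p) * \<mu>)"
      unfolding R_def using intp A(1,2)
      by (simp add: integral_sum integrable_sum Int_absorb1 sets.sets_into_space \<mu>_def)
    also have "\<dots> = T * \<mu>"
    proof -
      have "\<And>k. k \<in> K \<Longrightarrow> (\<integral>x. f k x ^ p \<partial>M) / c k = \<mu>"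
      proof -
        fix k assume k: "k \<in> K"
        have "c k \<noteq> 0" using cpos[OF k] by simp
        then have "(\<integral>x. f k x ^ p \<partial>M) \<noteq> 0" by (auto simp: c_def)
        then show "(\<integral>x. f k x ^ p \<partial>M) / c k = \<mu>" using A(3) by (simp add: c_def \<mu>_def)
      qed
      then have "(\<Sum>k\<in>K. (\<integral>x. f k x ^ p \<partial>M) / c k) = card K * \<mu>" by simp
      then show ?thesis using K(3) by (simp add: field_simps)
    qed
    finally show ?thesis using A(3) by (simp add: pos_divide_le_eq T_def t_def c_def \<mu>_def)
  qed
qed



interpretation lbprod: product_sigma_finite "\<lambda>_::nat. (lborel::real measure)"
  by standard

lemma sf_PiM_lborel: "finite (S::nat set) \<Longrightarrow> sigma_finite_measure (PiM S (\<lambda>_. (lborel::real measure)))"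
proof -
  assume S: "finite S"
  interpret finite_product_sigma_finite "\<lambda>_::nat. (lborel::real measure)" S
    by (intro finite_product_sigma_finite.intro lbprod.product_sigma_finite_axioms finite_product_sigma_finite_axioms.intro S)
  show ?thesis by unfold_locales
qed

lemma psf_PiM_lborel: "pair_sigma_finite (PiM {1..m} (\<lambda>_::nat. (lborel::real measure))) (PiM {1..n} (\<lambda>_::nat. (lborel::real measure)))"
  unfolding pair_sigma_finite_def using sf_PiM_lborel by auto

lemma dyadic_facts:
  assumes "I = dyadic_interval k a"
  shows "I \<in> sets lborel" "emeasure lborel I < \<infinity>" "0 < measure lborel I"
    "emeasure lborel I = ennreal (measure lborel I)"
proof -
  let ?l = "real_of_int a * 2 powr real_of_int k" and ?u = "(real_of_int a + 1) * 2 powr real_of_int k"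
  have lu: "?l < ?u" by (simp add: distrib_right)
  have I: "I = {?l..<?u}" using assms by (simp add: dyadic_interval_def)
  show "I \<in> sets lborel" using I by simp
  show "emeasure lborel I < \<infinity>" using I lu by simp
  show "0 < measure lborel I" using I lu by (simp add: measure_def)
  show "emeasure lborel I = ennreal (measure lborel I)" using I lu by (simp add: measure_def)
qed

lemma emeasure_box:
  assumes I: "I \<in> sets lborel" "emeasure lborel I = ennreal LI" "0 \<le> LI"
    and J: "J \<in> sets lborel" "emeasure lborel J = ennreal LJ" "0 \<le> LJ"
  shows "emeasure (PiM {1..m} (\<lambda>_::nat. (lborel::real measure)) \<Otimes>\<^sub>M PiM {1..n} (\<lambda>_::nat. (lborel::real measure)))
           (PiE {1..m} (\<lambda>_. I) \<times> PiE {1..n} (\<lambda>_. J)) = ennreal (LI ^ m * LJ ^ n)"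
proof -
  interpret P: pair_sigma_finite "PiM {1..m} (\<lambda>_::nat. (lborel::real measure))" "PiM {1..n} (\<lambda>_::nat. (lborel::real measure))"
    by (rule psf_PiM_lborel)
  have "emeasure (PiM {1..m} (\<lambda>_::nat. (lborel::real measure)) \<Otimes>\<^sub>M PiM {1..n} (\<lambda>_::nat. (lborel::real measure)))
           (PiE {1..m} (\<lambda>_. I) \<times> PiE {1..n} (\<lambda>_. J)) =
     emeasure (PiM {1..m} (\<lambda>_::nat. (lborel::real measure))) (PiE {1..m} (\<lambda>_. I)) *
     emeasure (PiM {1..n} (\<lambda>_::nat. (lborel::real measure))) (PiE {1..n} (\<lambda>_. J))"
    using I J by (intro P.M2.emeasure_pair_measure_Times sets_PiM_I_finite) auto
  also have "\<dots> = ennreal (LI ^ m) * ennreal (LJ ^ n)"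
    using I J by (simp add: lbprod.emeasure_PiM prod_ennreal ennreal_power)
  finally show ?thesis using I J by (simp add: ennreal_mult)
qed



lemma pow_powr_inv: "0 \<le> (x::real) \<Longrightarrow> 0 < p \<Longrightarrow> (x ^ p) powr (1 / real p) = x"
  by (cases "x = 0") (simp_all add: powr_realpow[symmetric] powr_powr)

lemma powr_inv_pow: "0 \<le> (c::real) \<Longrightarrow> 0 < p \<Longrightarrow> (c powr (1 / real p)) ^ p = c"
  by (cases "c = 0") (simp_all add: powr_realpow[symmetric] powr_powr)

lemma main_case:
  fixes m n :: nat and I J :: "real set" and G :: "nat \<Rightarrow> nat \<Rightarrow> real \<Rightarrow> real \<Rightarrow> real"
  assumes m1: "1 \<le> m" and n1: "1 \<le> n"
    and I: "I \<in> sets lborel" "emeasure lborel I < \<infinity>" "0 < measure lborel I" "emeasure lborel I = ennreal (measure lborel I)"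
    and J: "J \<in> sets lborel" "emeasure lborel J < \<infinity>" "0 < measure lborel J" "emeasure lborel J = ennreal (measure lborel J)"
    and meas: "\<And>i j. i \<in> {1..m} \<Longrightarrow> j \<in> {1..n} \<Longrightarrow>
                 set_borel_measurable lborel (I \<times> J) (\<lambda>z. G i j (fst z) (snd z))"
    and nonneg: "\<And>i j x y. i \<in> {1..m} \<Longrightarrow> j \<in> {1..n} \<Longrightarrow> x \<in> I \<Longrightarrow> y \<in> J \<Longrightarrow> 0 \<le> G i j x y"
    and bdd: "\<And>i j. i \<in> {1..m} \<Longrightarrow> j \<in> {1..n} \<Longrightarrow> \<exists>B. \<forall>x\<in>I. \<forall>y\<in>J. G i j x y \<le> B"
  shows "avg_multi m n (\<lambda>x y. \<Prod>i\<in>{1..m}. \<Prod>j\<in>{1..n}. G i j (x i) (y j)) I J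
         \<le> (\<Prod>i\<in>{1..m}. \<Prod>j\<in>{1..n}.
               (avg_sq (\<lambda>x y. G i j x y ^ max m n) I J) powr (1 / real (max m n)))"
proof -
  define p where "p = max m n"
  have p: "0 < p" "m \<le> p" "n \<le> p" using m1 by (auto simp: p_def)
  define LI where "LI = measure lborel I"
  define LJ where "LJ = measure lborel J"
  have LI: "0 < LI" using I(3) by (simp add: LI_def)
  have LJ: "0 < LJ" using J(3) by (simp add: LJ_def)
  define g where "g = (\<lambda>i j x y. if i \<in> {1..m} \<and> j \<in> {1..n} \<and> x \<in> I \<and> y \<in> J then G i j x y else 0)"
  have gm: "(\<lambda>z. g i j (fst z) (snd z)) \<in> borel_measurable lborel" for i j
  proof (cases "i \<in> {1..m} \<and> j \<in> {1..n}")
    case True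
    have "(\<lambda>z. indicator (I \<times> J) z *\<^sub>R G i j (fst z) (snd z)) \<in> borel_measurable lborel"
      using meas[of i j] True by (simp add: set_borel_measurable_def)
    moreover have "(\<lambda>z. g i j (fst z) (snd z)) = (\<lambda>z. indicator (I \<times> J) z *\<^sub>R G i j (fst z) (snd z))"
      using True by (auto simp: g_def fun_eq_iff indicator_def mem_Times_iff)
    ultimately show ?thesis by simp
  next
    case False
    then have "(\<lambda>z. g i j (fst z) (snd z)) = (\<lambda>z. 0)" by (auto simp: g_def fun_eq_iff)
    then show ?thesis by simp
  qed
  have gm2[measurable]: "(\<lambda>(x, y). g i j x y) \<in> borel_measurable (lborel \<Otimes>\<^sub>M lborel)" for i j
    using gm[of i j] by (simp add: lborel_prod split_beta')
  have g0: "0 \<le> g i j x y" for i j x y using nonneg by (auto simp: g_def)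
  have gsupp: "x \<notin> I \<or> y \<notin> J \<Longrightarrow> g i j x y = 0" for i j x y by (auto simp: g_def)
  have "\<forall>i j. \<exists>B. i \<in> {1..m} \<longrightarrow> j \<in> {1..n} \<longrightarrow> (\<forall>x\<in>I. \<forall>y\<in>J. G i j x y \<le> B)"
    using bdd by blast
  then obtain Bij where Bij: "\<And>i j. i \<in> {1..m} \<longrightarrow> j \<in> {1..n} \<longrightarrow> (\<forall>x\<in>I. \<forall>y\<in>J. G i j x y \<le> Bij i j)"
    by metis
  define BB where "BB = (\<Sum>i\<in>{1..m}. \<Sum>j\<in>{1..n}. \<bar>Bij i j\<bar>)"
  have BB0: "0 \<le> BB" unfolding BB_def by (intro sum_nonneg) auto
  have gB: "g i j x y \<le> BB" for i j x y
  proof (cases "i \<in> {1..m} \<and> j \<in> {1..n} \<and> x \<in> I \<and> y \<in> J")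
    case True
    then have "G i j x y \<le> Bij i j" using Bij[of i j] by auto
    then have "g i j x y \<le> \<bar>Bij i j\<bar>" using True abs_ge_self[of "Bij i j"] by (simp add: g_def)
    also have "\<dots> \<le> (\<Sum>j\<in>{1..n}. \<bar>Bij i j\<bar>)"
      using True by (intro member_le_sum) auto
    also have "\<dots> \<le> BB" unfolding BB_def
      using True by (intro member_le_sum[where f="\<lambda>i. \<Sum>j\<in>{1..n}. \<bar>Bij i j\<bar>"] sum_nonneg) auto
    finally show ?thesis .
  next
    case False
    then show ?thesis using BB0 by (auto simp: g_def)
  qed
  let ?PX = "PiM {1..m} (\<lambda>_::nat. (lborel::real measure))"
  let ?PY = "PiM {1..n} (\<lambda>_::nat. (lborel::real measure))"
  let ?S = "PiE {1..m} (\<lambda>_. I) \<times> PiE {1..n} (\<lambda>_. J)"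
  interpret P: pair_sigma_finite ?PX ?PY by (rule psf_PiM_lborel)
  define \<Phi> where "\<Phi> = (\<lambda>x y. \<Prod>i\<in>{1..m}. \<Prod>j\<in>{1..n}. g i j (x i) (y j))"
  have \<Phi>0: "\<Phi> x y = 0" if "x \<in> PiE {1..m} (\<lambda>_. UNIV)" "y \<in> PiE {1..n} (\<lambda>_. UNIV)" "(x, y) \<notin> ?S" for x y
  proof -
    from that have "(\<exists>i\<in>{1..m}. x i \<notin> I) \<or> (\<exists>j\<in>{1..n}. y j \<notin> J)"
      by (auto simp: PiE_iff)
    then show ?thesis
    proof
      assume "\<exists>i\<in>{1..m}. x i \<notin> I"
      then obtain i where i: "i \<in> {1..m}" "x i \<notin> I" by blast
      have "(\<Prod>j\<in>{1..n}. g i j (x i) (y j)) = 0"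
        using n1 i by (intro prod_zero) (auto intro!: bexI[of _ 1] gsupp)
      then show ?thesis unfolding \<Phi>_def using i by (intro prod_zero) auto
    next
      assume "\<exists>j\<in>{1..n}. y j \<notin> J"
      then obtain j where j: "j \<in> {1..n}" "y j \<notin> J" by blast
      have h: "(\<Prod>j\<in>{1..n}. g 1 j (x 1) (y j)) = 0"
        using j by (intro prod_zero) (auto intro!: bexI[of _ j] gsupp)
      show ?thesis unfolding \<Phi>_def
      proof (rule prod_zero)
        show "\<exists>i\<in>{1..m}. (\<Prod>j\<in>{1..n}. g i j (x i) (y j)) = 0"
          by (rule bexI[of _ 1], rule h) (use m1 in auto)
      qed simp
    qed
  qed
  have \<Phi>F: "\<Phi> x y = (\<Prod>i\<in>{1..m}. \<Prod>j\<in>{1..n}. G i j (x i) (y j))" if "(x, y) \<in> ?S" for x y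
    using that unfolding \<Phi>_def by (intro prod.cong refl) (auto simp: g_def PiE_iff)
  have space_pair: "space (?PX \<Otimes>\<^sub>M ?PY) = PiE {1..m} (\<lambda>_. UNIV) \<times> PiE {1..n} (\<lambda>_. UNIV)"
    by (simp add: space_pair_measure space_PiM)
  have S_sets: "?S \<in> sets (?PX \<Otimes>\<^sub>M ?PY)"
    using I(1) J(1) by (intro pair_measureI sets_PiM_I_finite) auto
  have S_meas: "emeasure (?PX \<Otimes>\<^sub>M ?PY) ?S < \<infinity>"
    using emeasure_box[OF I(1) I(4) _ J(1) J(4)] LI LJ by (simp add: LI_def LJ_def)
  have step1: "(LINT z : ?S | ?PX \<Otimes>\<^sub>M ?PY. (\<lambda>x y. \<Prod>i\<in>{1..m}. \<Prod>j\<in>{1..n}. G i j (x i) (y j)) (fst z) (snd z))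
      = (\<integral>z. \<Phi> (fst z) (snd z) \<partial>(?PX \<Otimes>\<^sub>M ?PY))"
    unfolding set_lebesgue_integral_def
  proof (rule Bochner_Integration.integral_cong[OF refl])
    fix z assume z: "z \<in> space (?PX \<Otimes>\<^sub>M ?PY)"
    obtain x y where xy: "z = (x, y)" by (cases z)
    show "indicator ?S z *\<^sub>R (\<Prod>i\<in>{1..m}. \<Prod>j\<in>{1..n}. G i j (fst z i) (snd z j)) = \<Phi> (fst z) (snd z)"
    proof (cases "z \<in> ?S")
      case True
      then show ?thesis using \<Phi>F[of x y] unfolding xy by simp
    next
      case False
      have "x \<in> PiE {1..m} (\<lambda>_. UNIV)" "y \<in> PiE {1..n} (\<lambda>_. UNIV)"
        using z space_pair unfolding xy by auto
      then show ?thesis using \<Phi>0[of x y] False unfolding xy by simp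
    qed
  qed
  have intPhi: "integrable (?PX \<Otimes>\<^sub>M ?PY) (\<lambda>z. \<Phi> (fst z) (snd z))"
  proof (rule integrable_bdd_supp[OF S_sets S_meas, where C="(BB ^ n) ^ m"])
    show "(\<lambda>z. \<Phi> (fst z) (snd z)) \<in> borel_measurable (?PX \<Otimes>\<^sub>M ?PY)"
      unfolding \<Phi>_def by measurable
    fix z assume z: "z \<in> space (?PX \<Otimes>\<^sub>M ?PY)"
    obtain x y where xy: "z = (x, y)" by (cases z)
    have inner: "(\<Prod>j\<in>{1..n}. \<bar>g i j (x i) (y j)\<bar>) \<le> BB ^ n" for i
    proof -
      have "(\<Prod>j\<in>{1..n}. \<bar>g i j (x i) (y j)\<bar>) \<le> (\<Prod>j\<in>{1..n}. BB)"
        by (rule prod_mono) (simp add: g0 gB)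
      then show ?thesis by simp
    qed
    have "\<bar>\<Phi> x y\<bar> = (\<Prod>i\<in>{1..m}. \<Prod>j\<in>{1..n}. \<bar>g i j (x i) (y j)\<bar>)"
      by (simp add: \<Phi>_def abs_prod)
    also have "\<dots> \<le> (\<Prod>i\<in>{1..m}. BB ^ n)"
      by (rule prod_mono, rule conjI, simp add: prod_nonneg, rule inner)
    finally have "\<bar>\<Phi> x y\<bar> \<le> (BB ^ n) ^ m" by simp
    then have bnd: "\<bar>\<Phi> x y\<bar> \<le> (BB ^ n) ^ m" .
    show "\<bar>\<Phi> (fst z) (snd z)\<bar> \<le> (BB ^ n) ^ m * indicator ?S z"
    proof (cases "z \<in> ?S")
      case True
      then show ?thesis using bnd unfolding xy by simp
    next
      case False
      have "x \<in> PiE {1..m} (\<lambda>_. UNIV)" "y \<in> PiE {1..n} (\<lambda>_. UNIV)"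
        using z space_pair unfolding xy by auto
      then have "\<Phi> x y = 0" using \<Phi>0[of x y] False unfolding xy by simp
      then show ?thesis using False unfolding xy by simp
    qed
  qed
  have fub: "(\<integral>z. \<Phi> (fst z) (snd z) \<partial>(?PX \<Otimes>\<^sub>M ?PY)) = (\<integral>y. (\<integral>x. \<Phi> x y \<partial>?PX) \<partial>?PY)"
    using P.integral_snd[of \<Phi>] intPhi by (simp add: split_beta')
  have fubint: "integrable ?PY (\<lambda>y. \<integral>x. \<Phi> x y \<partial>?PX)"
    using P.integrable_snd[of \<Phi>] intPhi by (simp add: split_beta')
  have int_t: "integrable lborel (\<lambda>t. \<Prod>j\<in>{1..n}. g i j t (y j))" for i y
  proof (rule integrable_bdd_supp[OF I(1) I(2), where C="BB ^ n"])
    show "(\<lambda>t. \<Prod>j\<in>{1..n}. g i j t (y j)) \<in> borel_measurable lborel" by measurable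
    fix t :: real
    have "\<bar>\<Prod>j\<in>{1..n}. g i j t (y j)\<bar> \<le> (\<Prod>j\<in>{1..n}. BB)"
      unfolding abs_prod by (rule prod_mono) (simp add: g0 gB)
    moreover have "t \<notin> I \<Longrightarrow> (\<Prod>j\<in>{1..n}. g i j t (y j)) = 0"
      using n1 by (intro prod_zero) (auto intro!: bexI[of _ 1] gsupp)
    ultimately show "\<bar>\<Prod>j\<in>{1..n}. g i j t (y j)\<bar> \<le> BB ^ n * indicator I t"
      by (cases "t \<in> I") auto
  qed
  have inner_eq: "(\<integral>x. \<Phi> x y \<partial>?PX) = (\<Prod>i\<in>{1..m}. \<integral>t. (\<Prod>j\<in>{1..n}. g i j t (y j)) \<partial>lborel)" for y
    unfolding \<Phi>_def by (rule lbprod.product_integral_prod) (simp, rule int_t)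
  define H where "H = (\<lambda>i j s. ((\<integral>t. g i j t s ^ p \<partial>lborel) / LI) powr (1 / real p))"
  have H0: "0 \<le> H i j s" for i j s by (simp add: H_def)
  have holder1: "(\<integral>t. (\<Prod>j\<in>{1..n}. g i j t (y j)) \<partial>lborel) \<le> LI * (\<Prod>j\<in>{1..n}. H i j (y j))" for i y
  proof -
    have "(\<integral>t. indicator I t * (\<Prod>j\<in>{1..n}. g i j t (y j)) \<partial>lborel) / measure lborel I
       \<le> (\<Prod>j\<in>{1..n}. ((\<integral>t. g i j t (y j) ^ p \<partial>lborel) / measure lborel I) powr (1 / real p))"
      by (rule holder[where B=BB]) (use p I in \<open>auto simp: g0 gB gsupp\<close>)
    moreover have "(\<integral>t. indicator I t * (\<Prod>j\<in>{1..n}. g i j t (y j)) \<partial>lborel) = (\<integral>t. (\<Prod>j\<in>{1..n}. g i j t (y j)) \<partial>lborel)"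
    proof (rule Bochner_Integration.integral_cong[OF refl])
      fix t :: real
      have "t \<notin> I \<Longrightarrow> (\<Prod>j\<in>{1..n}. g i j t (y j)) = 0"
        using n1 by (intro prod_zero) (auto intro!: bexI[of _ 1] gsupp)
      then show "indicator I t * (\<Prod>j\<in>{1..n}. g i j t (y j)) = (\<Prod>j\<in>{1..n}. g i j t (y j))"
        by (cases "t \<in> I") auto
    qed
    ultimately show ?thesis using LI by (simp add: H_def LI_def pos_divide_le_eq mult.commute)
  qed
  have step2: "(\<integral>x. \<Phi> x y \<partial>?PX) \<le> LI ^ m * (\<Prod>j\<in>{1..n}. \<Prod>i\<in>{1..m}. H i j (y j))" for y
  proof -
    have "(\<integral>x. \<Phi> x y \<partial>?PX) \<le> (\<Prod>i\<in>{1..m}. LI * (\<Prod>j\<in>{1..n}. H i j (y j)))"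
      unfolding inner_eq
    proof (rule prod_mono)
      fix i assume "i \<in> {1..m}"
      show "0 \<le> (\<integral>t. (\<Prod>j\<in>{1..n}. g i j t (y j)) \<partial>lborel) \<and> (\<integral>t. (\<Prod>j\<in>{1..n}. g i j t (y j)) \<partial>lborel) \<le> LI * (\<Prod>j\<in>{1..n}. H i j (y j))"
        using holder1[of i y] by (auto intro!: Bochner_Integration.integral_nonneg g0 prod_nonneg)
    qed
    also have "\<dots> = (\<Prod>i\<in>{1..m}. LI) * (\<Prod>i\<in>{1..m}. \<Prod>j\<in>{1..n}. H i j (y j))"
      by (rule prod.distrib)
    also have "\<dots> = LI ^ m * (\<Prod>j\<in>{1..n}. \<Prod>i\<in>{1..m}. H i j (y j))"
      by (subst prod.swap) simp
    finally show ?thesis .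
  qed
  have intgp: "integrable lborel (\<lambda>t. g i j t s ^ p)" for i j s
  proof (rule integrable_bdd_supp[OF I(1) I(2), where C="BB ^ p"])
    show "(\<lambda>t. g i j t s ^ p) \<in> borel_measurable lborel" by measurable
    fix t :: real
    show "\<bar>g i j t s ^ p\<bar> \<le> BB ^ p * indicator I t"
      using g0[of i j t s] gB[of i j t s] gsupp[of t s i j] p(1)
      by (cases "t \<in> I") (auto intro: power_mono simp: zero_power)
  qed
  have int0: "0 \<le> (\<integral>t. g i j t s ^ p \<partial>lborel)" for i j s
    by (rule Bochner_Integration.integral_nonneg) (simp add: g0)
  have Hm[measurable]: "(\<lambda>s. H i j s) \<in> borel_measurable lborel" for i j
    unfolding H_def by measurable
  have HB: "H i j s \<le> BB" for i j s
  proof -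
    have "(\<integral>t. g i j t s ^ p \<partial>lborel) \<le> (\<integral>t. BB ^ p * indicator I t \<partial>lborel)"
    proof (rule integral_mono[OF intgp])
      show "integrable lborel (\<lambda>t. BB ^ p * indicator I t :: real)"
        using I(1,2) by (intro integrable_mult_right integrable_real_indicator)
      fix t :: real
      show "g i j t s ^ p \<le> BB ^ p * indicator I t"
        using g0[of i j t s] gB[of i j t s] gsupp[of t s i j] p(1)
        by (cases "t \<in> I") (auto intro: power_mono simp: zero_power)
    qed
    also have "\<dots> = BB ^ p * LI" using I(1,2) by (simp add: LI_def)
    finally have "(\<integral>t. g i j t s ^ p \<partial>lborel) / LI \<le> BB ^ p" using LI by (simp add: divide_le_eq)
    then have "H i j s \<le> (BB ^ p) powr (1 / real p)"
      unfolding H_def using int0 LI by (intro powr_mono2) auto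
    also have "\<dots> = BB" using BB0 p(1) by (rule pow_powr_inv)
    finally show ?thesis .
  qed
  have Hsupp: "s \<notin> J \<Longrightarrow> H i j s = 0" for i j s
    by (simp add: H_def gsupp zero_power p(1))
  have Hpow: "H i j s ^ p = (\<integral>t. g i j t s ^ p \<partial>lborel) / LI" for i j s
    unfolding H_def using int0 LI p(1) by (intro powr_inv_pow) auto
  have intH: "integrable lborel (\<lambda>s. \<Prod>i\<in>{1..m}. H i j s)" for j
  proof (rule integrable_bdd_supp[OF J(1) J(2), where C="BB ^ m"])
    show "(\<lambda>s. \<Prod>i\<in>{1..m}. H i j s) \<in> borel_measurable lborel" by measurable
    fix s :: real
    have "\<bar>\<Prod>i\<in>{1..m}. H i j s\<bar> \<le> (\<Prod>i\<in>{1..m}. BB)"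
      unfolding abs_prod by (rule prod_mono) (simp add: H0 HB)
    moreover have "s \<notin> J \<Longrightarrow> (\<Prod>i\<in>{1..m}. H i j s) = 0"
      using m1 by (intro prod_zero) (auto intro!: bexI[of _ 1] Hsupp)
    ultimately show "\<bar>\<Prod>i\<in>{1..m}. H i j s\<bar> \<le> BB ^ m * indicator J s"
      by (cases "s \<in> J") auto
  qed
  have intRHS: "integrable ?PY (\<lambda>y. LI ^ m * (\<Prod>j\<in>{1..n}. (\<lambda>s. \<Prod>i\<in>{1..m}. H i j s) (y j)))"
    by (intro integrable_mult_right lbprod.product_integrable_prod) (simp, rule intH)
  have step3: "(\<integral>y. (\<integral>x. \<Phi> x y \<partial>?PX) \<partial>?PY) \<le> LI ^ m * (\<Prod>j\<in>{1..n}. \<integral>s. (\<Prod>i\<in>{1..m}. H i j s) \<partial>lborel)"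
  proof -
    have "(\<integral>y. (\<integral>x. \<Phi> x y \<partial>?PX) \<partial>?PY) \<le> (\<integral>y. LI ^ m * (\<Prod>j\<in>{1..n}. (\<lambda>s. \<Prod>i\<in>{1..m}. H i j s) (y j)) \<partial>?PY)"
      by (rule integral_mono[OF fubint intRHS], rule step2)
    also have "\<dots> = LI ^ m * (\<Prod>j\<in>{1..n}. \<integral>s. (\<Prod>i\<in>{1..m}. H i j s) \<partial>lborel)"
      by (subst integral_mult_right_zero, subst lbprod.product_integral_prod) (simp_all add: intH intH[simplified])
    finally show ?thesis .
  qed
  have holder2: "(\<integral>s. (\<Prod>i\<in>{1..m}. H i j s) \<partial>lborel) \<le> LJ * (\<Prod>i\<in>{1..m}. ((\<integral>s. H i j s ^ p \<partial>lborel) / LJ) powr (1 / real p))" for j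
  proof -
    have "(\<integral>s. indicator J s * (\<Prod>i\<in>{1..m}. H i j s) \<partial>lborel) / measure lborel J
       \<le> (\<Prod>i\<in>{1..m}. ((\<integral>s. H i j s ^ p \<partial>lborel) / measure lborel J) powr (1 / real p))"
      by (rule holder[where B=BB]) (use p J in \<open>auto simp: H0 HB Hsupp\<close>)
    moreover have "(\<integral>s. indicator J s * (\<Prod>i\<in>{1..m}. H i j s) \<partial>lborel) = (\<integral>s. (\<Prod>i\<in>{1..m}. H i j s) \<partial>lborel)"
    proof (rule Bochner_Integration.integral_cong[OF refl])
      fix s :: real
      have "s \<notin> J \<Longrightarrow> (\<Prod>i\<in>{1..m}. H i j s) = 0"
        using m1 by (intro prod_zero) (auto intro!: bexI[of _ 1] Hsupp)
      then show "indicator J s * (\<Prod>i\<in>{1..m}. H i j s) = (\<Prod>i\<in>{1..m}. H i j s)"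
        by (cases "s \<in> J") auto
    qed
    ultimately show ?thesis using LJ by (simp add: LJ_def pos_divide_le_eq mult.commute)
  qed
  have avg: "(\<integral>s. H i j s ^ p \<partial>lborel) / LJ = avg_sq (\<lambda>x y. G i j x y ^ p) I J"
    if ij: "i \<in> {1..m}" "j \<in> {1..n}" for i j
  proof -
    have IJs: "I \<times> J \<in> sets (lborel \<Otimes>\<^sub>M lborel)" using I(1) J(1) by (rule pair_measureI)
    have IJm: "emeasure (lborel \<Otimes>\<^sub>M lborel) (I \<times> J) < \<infinity>"
      using I(1,4) J(1,4) by (simp add: lborel.emeasure_pair_measure_Times ennreal_mult_less_top)
    have intpair: "integrable (lborel \<Otimes>\<^sub>M lborel) (\<lambda>(t, s). g i j t s ^ p)"
    proof (rule integrable_bdd_supp[OF IJs IJm, where C="BB ^ p"])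
      show "(\<lambda>(t, s). g i j t s ^ p) \<in> borel_measurable (lborel \<Otimes>\<^sub>M lborel)" by measurable
      fix z :: "real \<times> real"
      obtain t s where z: "z = (t, s)" by (cases z)
      show "\<bar>(\<lambda>(t, s). g i j t s ^ p) z\<bar> \<le> BB ^ p * indicator (I \<times> J) z"
        using g0[of i j t s] gB[of i j t s] gsupp[of t s i j] p(1) unfolding z
        by (cases "t \<in> I \<and> s \<in> J") (auto intro: power_mono simp: zero_power)
    qed
    have "(\<integral>s. H i j s ^ p \<partial>lborel) = (\<integral>s. (\<integral>t. g i j t s ^ p \<partial>lborel) \<partial>lborel) / LI"
      by (simp add: Hpow)
    also have "(\<integral>s. (\<integral>t. g i j t s ^ p \<partial>lborel) \<partial>lborel) = integral\<^sup>L (lborel \<Otimes>\<^sub>M lborel) (\<lambda>(t, s). g i j t s ^ p)"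
      by (rule lborel_pair.integral_snd[OF intpair])
    also have "\<dots> = (\<integral>z. g i j (fst z) (snd z) ^ p \<partial>lborel)"
      by (simp add: lborel_prod split_beta')
    also have "\<dots> = (LINT z : I \<times> J | lborel. G i j (fst z) (snd z) ^ p)"
      unfolding set_lebesgue_integral_def
    proof (rule Bochner_Integration.integral_cong[OF refl])
      fix z :: "real \<times> real"
      obtain t s where z: "z = (t, s)" by (cases z)
      show "g i j (fst z) (snd z) ^ p = indicator (I \<times> J) z *\<^sub>R G i j (fst z) (snd z) ^ p"
        using ij p(1) unfolding z by (auto simp: g_def zero_power indicator_def)
    qed
    finally show ?thesis using LI LJ
      by (simp add: avg_sq_def LI_def LJ_def field_simps)
  qed
  have "(\<integral>z. \<Phi> (fst z) (snd z) \<partial>(?PX \<Otimes>\<^sub>M ?PY))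
     \<le> LI ^ m * (\<Prod>j\<in>{1..n}. LJ * (\<Prod>i\<in>{1..m}. ((\<integral>s. H i j s ^ p \<partial>lborel) / LJ) powr (1 / real p)))"
    unfolding fub
    by (rule order_trans[OF step3], rule mult_left_mono, rule prod_mono, rule conjI,
        rule Bochner_Integration.integral_nonneg, simp add: H0 prod_nonneg, rule holder2, simp add: LI less_imp_le)
  also have "\<dots> = LI ^ m * LJ ^ n * (\<Prod>i\<in>{1..m}. \<Prod>j\<in>{1..n}. (avg_sq (\<lambda>x y. G i j x y ^ p) I J) powr (1 / real p))"
  proof -
    have "(\<Prod>j\<in>{1..n}. LJ * (\<Prod>i\<in>{1..m}. ((\<integral>s. H i j s ^ p \<partial>lborel) / LJ) powr (1 / real p)))
       = LJ ^ n * (\<Prod>j\<in>{1..n}. \<Prod>i\<in>{1..m}. (avg_sq (\<lambda>x y. G i j x y ^ p) I J) powr (1 / real p))"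
    proof -
      have "(\<Prod>j\<in>{1..n}. \<Prod>i\<in>{1..m}. ((\<integral>s. H i j s ^ p \<partial>lborel) / LJ) powr (1 / real p))
          = (\<Prod>j\<in>{1..n}. \<Prod>i\<in>{1..m}. (avg_sq (\<lambda>x y. G i j x y ^ p) I J) powr (1 / real p))"
      proof (rule prod.cong[OF refl], rule prod.cong[OF refl])
        fix i j assume "j \<in> {1..n}" "i \<in> {1..m}"
        then show "((\<integral>s. H i j s ^ p \<partial>lborel) / LJ) powr (1 / real p) = (avg_sq (\<lambda>x y. G i j x y ^ p) I J) powr (1 / real p)"
          using avg[of i j] by simp
      qed
      then show ?thesis by (simp only: prod.distrib prod_constant card_atLeastAtMost) simp
    qed
    moreover have "(\<Prod>j\<in>{1..n}. \<Prod>i\<in>{1..m}. (avg_sq (\<lambda>x y. G i j x y ^ p) I J) powr (1 / real p))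
       = (\<Prod>i\<in>{1..m}. \<Prod>j\<in>{1..n}. (avg_sq (\<lambda>x y. G i j x y ^ p) I J) powr (1 / real p))"
      by (rule prod.swap)
    ultimately show ?thesis by (simp only: mult.assoc)
  qed
  finally have main: "(\<integral>z. \<Phi> (fst z) (snd z) \<partial>(?PX \<Otimes>\<^sub>M ?PY))
     \<le> LI ^ m * LJ ^ n * (\<Prod>i\<in>{1..m}. \<Prod>j\<in>{1..n}. (avg_sq (\<lambda>x y. G i j x y ^ p) I J) powr (1 / real p))" .
  show ?thesis
    unfolding avg_multi_def step1 p_def[symmetric]
    using main LI LJ by (simp add: LI_def LJ_def pos_divide_le_eq mult.commute)
qed

lemma edge_case:
  fixes m n :: nat and I J :: "real set" and G :: "nat \<Rightarrow> nat \<Rightarrow> real \<Rightarrow> real \<Rightarrow> real"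
  assumes mn: "m = 0 \<or> n = 0"
    and I: "I \<in> sets lborel" "emeasure lborel I < \<infinity>" "0 < measure lborel I" "emeasure lborel I = ennreal (measure lborel I)"
    and J: "J \<in> sets lborel" "emeasure lborel J < \<infinity>" "0 < measure lborel J" "emeasure lborel J = ennreal (measure lborel J)"
  shows "avg_multi m n (\<lambda>x y. \<Prod>i\<in>{1..m}. \<Prod>j\<in>{1..n}. G i j (x i) (y j)) I J
         \<le> (\<Prod>i\<in>{1..m}. \<Prod>j\<in>{1..n}.
               (avg_sq (\<lambda>x y. G i j x y ^ max m n) I J) powr (1 / real (max m n)))"
proof -
  let ?PX = "PiM {1..m} (\<lambda>_::nat. (lborel::real measure))"
  let ?PY = "PiM {1..n} (\<lambda>_::nat. (lborel::real measure))"
  let ?S = "PiE {1..m} (\<lambda>_. I) \<times> PiE {1..n} (\<lambda>_. J)"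
  have F1: "(\<lambda>x y. \<Prod>i\<in>{1..m}. \<Prod>j\<in>{1..n}. G i j (x i) (y j)) = (\<lambda>x y. 1)"
    using mn by auto
  have R1: "(\<Prod>i\<in>{1..m}. \<Prod>j\<in>{1..n}. (avg_sq (\<lambda>x y. G i j x y ^ max m n) I J) powr (1 / real (max m n))) = 1"
    using mn by auto
  have S_sets: "?S \<in> sets (?PX \<Otimes>\<^sub>M ?PY)"
    using I(1) J(1) by (intro pair_measureI sets_PiM_I_finite) auto
  have em: "emeasure (?PX \<Otimes>\<^sub>M ?PY) ?S = ennreal (measure lborel I ^ m * measure lborel J ^ n)"
    using emeasure_box[OF I(1) I(4) _ J(1) J(4)] I(3) J(3) by simp
  have pos: "0 < measure lborel I ^ m * measure lborel J ^ n" using I(3) J(3) by simp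
  have "(LINT z : ?S | ?PX \<Otimes>\<^sub>M ?PY. (1::real)) = measure (?PX \<Otimes>\<^sub>M ?PY) ?S"
    using set_integral_const[OF S_sets, of "1::real"] em by simp
  also have "\<dots> = measure lborel I ^ m * measure lborel J ^ n"
    using em pos by (simp add: measure_def)
  finally have "avg_multi m n (\<lambda>x y. \<Prod>i\<in>{1..m}. \<Prod>j\<in>{1..n}. G i j (x i) (y j)) I J = 1"
    unfolding avg_multi_def F1 using pos I(3) J(3) by simp
  then show ?thesis using R1 by simp
qed

theorem lemma2:
  fixes m n :: nat and I J :: "real set" and G :: "nat \<Rightarrow> nat \<Rightarrow> real \<Rightarrow> real \<Rightarrow> real"
  assumes "dyadic_square I J"
    and meas: "\<And>i j. i \<in> {1..m} \<Longrightarrow> j \<in> {1..n} \<Longrightarrow>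
                 set_borel_measurable lborel (I \<times> J) (\<lambda>z. G i j (fst z) (snd z))"
    and nonneg: "\<And>i j x y. i \<in> {1..m} \<Longrightarrow> j \<in> {1..n} \<Longrightarrow> x \<in> I \<Longrightarrow> y \<in> J \<Longrightarrow> 0 \<le> G i j x y"
    and bdd: "\<And>i j. i \<in> {1..m} \<Longrightarrow> j \<in> {1..n} \<Longrightarrow> \<exists>B. \<forall>x\<in>I. \<forall>y\<in>J. G i j x y \<le> B"
  shows "avg_multi m n (\<lambda>x y. \<Prod>i\<in>{1..m}. \<Prod>j\<in>{1..n}. G i j (x i) (y j)) I J
         \<le> (\<Prod>i\<in>{1..m}. \<Prod>j\<in>{1..n}.
               (avg_sq (\<lambda>x y. G i j x y ^ max m n) I J) powr (1 / real (max m n)))"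
proof -
  obtain k a b where I: "I = dyadic_interval k a" and J: "J = dyadic_interval k b"
    using assms(1) unfolding dyadic_square_def by blast
  note Ifacts = dyadic_facts[OF I]
  note Jfacts = dyadic_facts[OF J]
  show ?thesis
  proof (cases "m = 0 \<or> n = 0")
    case True
    then show ?thesis by (rule edge_case[OF _ Ifacts Jfacts])
  next
    case False
    then have "1 \<le> m" "1 \<le> n" by auto
    then show ?thesis by (rule main_case[OF _ _ Ifacts Jfacts meas nonneg bdd])
  qed
qed

end
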